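(* Let $\mathcal{C}$ be a clutter whose vertex set is a subset of $\{x_1,\dots,x_n\}$, $S=\mathbb{K}[x_1,\dots,x_n]$ with $\mathbb{K}$ a field, and let $e_1$ be an edge of $\mathcal{C}$ such that $\{e_1\}$ is a 2-collage for $\mathcal{C}$. Then $\operatorname{sreg}(S/I(\mathcal{C}))\le |e_1|-1$.
   Context: A clutter $\mathcal{C}$ consists of a finite vertex set and a collection $E(\mathcal{C})$ of subsets (edges), no edge containing another; vertices are identified with variables and $I(\mathcal{C})=(\prod_{x\in e}x : e\in E(\mathcal{C}))$ is the edge ideal. A 2-collage for $\mathcal{C}$ is a subset $C\subseteq E(\mathcal{C})$ such that for each $e\in E(\mathcal{C})$ there is a vertex $v$ with $e\setminus\{v\}$ contained in some edge of $C$. Stanley regularity: for a squarefree monomial ideal $I\subset S$, a squarefree Stanley decomposition of $S/I$ is a decomposition $S/I=\bigoplus_{i=1}^r u_i\mathbb{K}[Z_i]$ as $\mathbb{K}$-vector spaces, where $Z_i\subseteq\{x_1,\dots,x_n\}$, $u_i$ are (images of) squarefree monomials with $\operatorname{supp}(u_i)\subseteq Z_i$, and each $u_i\mathbb{K}[Z_i]$ is free over $\mathbb{K}[Z_i]$. Its Stanley regularity is $\max_i\deg(u_i)$, and $\operatorname{sreg}(S/I)$ is the minimum over all such decompositions. *)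

theory Defs
  imports Main
begin

text \<open>Variables x_1..x_n are identified with the naturals 1..n. A squarefree monomial is identified with its
support (a finite set of variables); its degree is the cardinality.\<close>

type_synonym monomial = "nat \<Rightarrow> nat"

definition supp :: "monomial \<Rightarrow> nat set" where
  "supp m = {x. m x \<noteq> 0}"

definition is_monomial :: "nat \<Rightarrow> monomial \<Rightarrow> bool" where
  "is_monomial n m \<longleftrightarrow> supp m \<subseteq> {1..n}"

definition clutter :: "nat set \<Rightarrow> nat set set \<Rightarrow> bool" where
  "clutter V E \<longleftrightarrow> finite V \<and> (\<forall>e\<in>E. e \<subseteq> V)
     \<and> (\<forall>e\<in>E. \<forall>f\<in>E. e \<subseteq> f \<longrightarrow> e = f)"

text \<open>A monomial lies in the edge ideal I(C) iff it is divisible by some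
edge monomial prod_{x in e} x, i.e. some edge is contained in its support.\<close>
definition in_edge_ideal :: "nat set set \<Rightarrow> monomial \<Rightarrow> bool" where
  "in_edge_ideal E m \<longleftrightarrow> (\<exists>e\<in>E. e \<subseteq> supp m)"

definition two_collage :: "nat set \<Rightarrow> nat set set \<Rightarrow> nat set set \<Rightarrow> bool" where
  "two_collage V E C \<longleftrightarrow> C \<subseteq> E \<and>
     (\<forall>e\<in>E. \<exists>v\<in>V. \<exists>f\<in>C. e - {v} \<subseteq> f)"

text \<open>Monomials of the subspace u K[Z], u the squarefree monomial with support U.\<close>
definition stanley_space :: "nat set \<Rightarrow> nat set \<Rightarrow> monomial set" where
  "stanley_space U Z =
     {(\<lambda>x. (if x \<in> U then 1 else 0) + m' x) | m'. supp m' \<subseteq> Z}"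

text \<open>Squarefree Stanley decomposition of S/I(C), given as a finite list of
pairs (U_i, Z_i). Since S/I has the K-basis of standard monomials (monomials
not in I) and each u_i K[Z_i] is spanned by monomials, the vector space
direct sum decomposition S/I = \<Oplus> u_i K[Z_i] amounts to: the monomial sets
are pairwise disjoint and their union is the set of standard monomials;
freeness of u_i K[Z_i] over K[Z_i] amounts to no monomial u_i*m (m in K[Z_i])
lying in I.\<close>
definition stanley_decomp :: "nat \<Rightarrow> nat set set \<Rightarrow> (nat set \<times> nat set) list \<Rightarrow> bool" where
  "stanley_decomp n E D \<longleftrightarrow>
     (\<forall>i<length D. fst (D!i) \<subseteq> snd (D!i) \<and> snd (D!i) \<subseteq> {1..n}) \<and>
     (\<forall>i<length D. \<forall>m\<in>stanley_space (fst (D!i)) (snd (D!i)). \<not> in_edge_ideal E m) \<and>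
     (\<forall>i<length D. \<forall>j<length D. i \<noteq> j \<longrightarrow>
        stanley_space (fst (D!i)) (snd (D!i)) \<inter> stanley_space (fst (D!j)) (snd (D!j)) = {}) \<and>
     (\<Union>i<length D. stanley_space (fst (D!i)) (snd (D!i)))
        = {m. is_monomial n m \<and> \<not> in_edge_ideal E m}"

definition stanley_reg_of :: "(nat set \<times> nat set) list \<Rightarrow> nat" where
  "stanley_reg_of D = Sup ((\<lambda>p. card (fst p)) ` set D)"

definition sreg :: "nat \<Rightarrow> nat set set \<Rightarrow> nat" where
  "sreg n E = Inf {stanley_reg_of D | D. stanley_decomp n E D}"

end

theory Submission
  imports Defs
begin

lemma supp_indic_plus:
  "supp (\<lambda>x. (if x \<in> U then 1 else 0) + m' x) = U \<union> supp m'"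
  by (auto simp: supp_def)

lemma stanley_space_iff:
  assumes "U \<subseteq> Z"
  shows "m \<in> stanley_space U Z \<longleftrightarrow> U \<subseteq> supp m \<and> supp m \<subseteq> Z"
proof
  assume "m \<in> stanley_space U Z"
  then obtain m' where m: "m = (\<lambda>x. (if x \<in> U then 1 else 0) + m' x)" and "supp m' \<subseteq> Z"
    unfolding stanley_space_def by blast
  then show "U \<subseteq> supp m \<and> supp m \<subseteq> Z" using assms by (simp add: supp_indic_plus)
next
  assume h: "U \<subseteq> supp m \<and> supp m \<subseteq> Z"
  define m' where "m' = (\<lambda>x. m x - (if x \<in> U then 1 else 0))"
  have "m = (\<lambda>x. (if x \<in> U then 1 else 0) + m' x)"
  proof
    fix x show "m x = (if x \<in> U then 1 else 0) + m' x"
      using h by (cases "x \<in> U") (auto simp: m'_def supp_def)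
  qed
  moreover have "supp m' \<subseteq> Z" using h by (auto simp: m'_def supp_def)
  ultimately show "m \<in> stanley_space U Z" unfolding stanley_space_def by blast
qed

lemma Sup_nat_le:
  assumes "finite (X::nat set)" "\<And>y. y \<in> X \<Longrightarrow> y \<le> c"
  shows "Sup X \<le> c"
proof (cases "X = {}")
  case True then show ?thesis by (simp add: Sup_nat_def)
next
  case False then show ?thesis using assms by (meson cSup_least)
qed

theorem lemma5p15:
  fixes n :: nat and V :: "nat set" and E :: "nat set set" and e1 :: "nat set"
  assumes "V \<subseteq> {1..n}"
    and "clutter V E"
    and "e1 \<in> E"
    and "two_collage V E {e1}"
  shows "sreg n E \<le> card e1 - 1"
proof -
  have e1n: "e1 \<subseteq> {1..n}" using assms unfolding clutter_def by blast
  have fin: "finite e1" using e1n finite_subset by blast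
  have clut: "\<And>e. e \<in> E \<Longrightarrow> e \<subseteq> e1 \<Longrightarrow> e = e1"
    using assms(2,3) unfolding clutter_def by blast
  have coll: "\<And>e. e \<in> E \<Longrightarrow> \<exists>v. e - {v} \<subseteq> e1"
    using assms(4) unfolding two_collage_def by blast
  define Z where "Z A = A \<union> {w \<in> {1..n}. w \<notin> e1 \<and> \<not> (\<exists>e\<in>E. w \<in> e \<and> e - {w} \<subseteq> A)}" for A
  have AZ: "A \<subseteq> Z A" for A unfolding Z_def by blast
  have Ze1: "A \<subseteq> e1 \<Longrightarrow> Z A \<inter> e1 = A" for A unfolding Z_def by blast
  have Zn: "A \<subseteq> e1 \<Longrightarrow> Z A \<subseteq> {1..n}" for A using e1n unfolding Z_def by blast
  have charac: "\<not> in_edge_ideal E m \<longleftrightarrow> (supp m \<inter> e1 \<noteq> e1 \<and> supp m \<subseteq> Z (supp m \<inter> e1))"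
    if mn: "supp m \<subseteq> {1..n}" for m
  proof
    assume ni: "\<not> in_edge_ideal E m"
    have "\<not> e1 \<subseteq> supp m" using ni assms(3) unfolding in_edge_ideal_def by blast
    then have "supp m \<inter> e1 \<noteq> e1" by blast
    moreover have "supp m \<subseteq> Z (supp m \<inter> e1)"
    proof
      fix x assume x: "x \<in> supp m"
      show "x \<in> Z (supp m \<inter> e1)"
      proof (cases "x \<in> e1")
        case True then show ?thesis using x unfolding Z_def by blast
      next
        case False
        have "\<not> (\<exists>e\<in>E. x \<in> e \<and> e - {x} \<subseteq> supp m \<inter> e1)"
        proof
          assume "\<exists>e\<in>E. x \<in> e \<and> e - {x} \<subseteq> supp m \<inter> e1"
          then obtain e where "e \<in> E" "x \<in> e" "e - {x} \<subseteq> supp m \<inter> e1" by blast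
          then have "e \<subseteq> supp m" using x by blast
          with \<open>e \<in> E\<close> ni show False unfolding in_edge_ideal_def by blast
        qed
        then show ?thesis using x mn False unfolding Z_def by blast
      qed
    qed
    ultimately show "supp m \<inter> e1 \<noteq> e1 \<and> supp m \<subseteq> Z (supp m \<inter> e1)" by blast
  next
    assume h: "supp m \<inter> e1 \<noteq> e1 \<and> supp m \<subseteq> Z (supp m \<inter> e1)"
    show "\<not> in_edge_ideal E m"
    proof
      assume "in_edge_ideal E m"
      then obtain e where e: "e \<in> E" "e \<subseteq> supp m" unfolding in_edge_ideal_def by blast
      show False
      proof (cases "e \<subseteq> e1")
        case True
        then have "e = e1" using clut e by blast
        then show False using h e by blast
      next
        case False
        obtain v where v: "e - {v} \<subseteq> e1" using coll e by blast
        with False have ve: "v \<in> e" "v \<notin> e1" by blast+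
        then have "v \<in> Z (supp m \<inter> e1)" using h e by blast
        moreover have "e - {v} \<subseteq> supp m \<inter> e1" using v e by blast
        ultimately show False using ve e unfolding Z_def by blast
      qed
    qed
  qed
  have finP: "finite {A. A \<subset> e1}" using fin by (rule rev_finite_subset[OF finite_Pow_iff[THEN iffD2]]) auto
  obtain xs where xs: "distinct xs" "set xs = {A. A \<subset> e1}"
    using finite_distinct_list[OF finP] by blast
  define D where "D = map (\<lambda>A. (A, Z A)) xs"
  have Di: "i < length D \<Longrightarrow> fst (D!i) = xs!i \<and> snd (D!i) = Z (xs!i)" for i
    by (simp add: D_def)
  have lenD: "length D = length xs" by (simp add: D_def)
  have xsi: "i < length xs \<Longrightarrow> xs!i \<subset> e1" for i using xs(2) nth_mem by blast
  have memsp: "i < length xs \<Longrightarrow> m \<in> stanley_space (xs!i) (Z (xs!i)) \<longleftrightarrow>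
        xs!i \<subseteq> supp m \<and> supp m \<subseteq> Z (xs!i)" for i m
    using stanley_space_iff[OF AZ] by blast
  have memsp2: "i < length xs \<Longrightarrow> m \<in> stanley_space (xs!i) (Z (xs!i)) \<longleftrightarrow>
        supp m \<subseteq> {1..n} \<and> \<not> in_edge_ideal E m \<and> supp m \<inter> e1 = xs!i" for i m
  proof -
    assume i: "i < length xs"
    have s: "xs!i \<subset> e1" using xsi[OF i] .
    show ?thesis
    proof
      assume "m \<in> stanley_space (xs!i) (Z (xs!i))"
      then have a: "xs!i \<subseteq> supp m" "supp m \<subseteq> Z (xs!i)" using memsp[OF i] by blast+
      have eq: "supp m \<inter> e1 = xs!i" using a Ze1[of "xs!i"] s by blast
      have sn: "supp m \<subseteq> {1..n}" using a Zn[of "xs!i"] s by blast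
      have "\<not> in_edge_ideal E m" using charac[OF sn] eq a s by auto
      then show "supp m \<subseteq> {1..n} \<and> \<not> in_edge_ideal E m \<and> supp m \<inter> e1 = xs!i"
        using eq sn by blast
    next
      assume h: "supp m \<subseteq> {1..n} \<and> \<not> in_edge_ideal E m \<and> supp m \<inter> e1 = xs!i"
      then have "supp m \<subseteq> Z (xs!i)" using charac[of m] by auto
      then show "m \<in> stanley_space (xs!i) (Z (xs!i))" using memsp[OF i] h by blast
    qed
  qed
  have dec: "stanley_decomp n E D"
    unfolding stanley_decomp_def
  proof (intro conjI allI impI)
    fix i assume i: "i < length D"
    show "fst (D!i) \<subseteq> snd (D!i)" using Di[OF i] AZ by simp
    show "snd (D!i) \<subseteq> {1..n}" using Di[OF i] Zn xsi i lenD by auto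
  next
    fix i assume i: "i < length D"
    show "\<forall>m\<in>stanley_space (fst (D!i)) (snd (D!i)). \<not> in_edge_ideal E m"
      using Di[OF i] memsp2 i lenD by auto
  next
    fix i j assume i: "i < length D" and j: "j < length D" and ij: "i \<noteq> j"
    have "xs!i \<noteq> xs!j" using xs(1) i j ij lenD by (simp add: nth_eq_iff_index_eq)
    then show "stanley_space (fst (D!i)) (snd (D!i)) \<inter> stanley_space (fst (D!j)) (snd (D!j)) = {}"
      using Di[OF i] Di[OF j] memsp2 i j lenD by auto
  next
    show "(\<Union>i<length D. stanley_space (fst (D!i)) (snd (D!i)))
        = {m. is_monomial n m \<and> \<not> in_edge_ideal E m}"
    proof
      show "(\<Union>i<length D. stanley_space (fst (D!i)) (snd (D!i)))
        \<subseteq> {m. is_monomial n m \<and> \<not> in_edge_ideal E m}"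
      proof
        fix m assume "m \<in> (\<Union>i<length D. stanley_space (fst (D!i)) (snd (D!i)))"
        then obtain i where i: "i < length D" "m \<in> stanley_space (fst (D!i)) (snd (D!i))" by blast
        then have "supp m \<subseteq> {1..n} \<and> \<not> in_edge_ideal E m"
          using Di[OF i(1)] memsp2[of i m] lenD by simp
        then show "m \<in> {m. is_monomial n m \<and> \<not> in_edge_ideal E m}"
          by (simp add: is_monomial_def)
      qed
    next
      show "{m. is_monomial n m \<and> \<not> in_edge_ideal E m} \<subseteq>
         (\<Union>i<length D. stanley_space (fst (D!i)) (snd (D!i)))"
      proof
        fix m assume m: "m \<in> {m. is_monomial n m \<and> \<not> in_edge_ideal E m}"
        then have sn: "supp m \<subseteq> {1..n}" and ni: "\<not> in_edge_ideal E m"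
          by (auto simp: is_monomial_def)
        have "supp m \<inter> e1 \<subset> e1" using charac[OF sn] ni by blast
        then have "supp m \<inter> e1 \<in> set xs" using xs(2) by blast
        then obtain i where i: "i < length xs" "xs!i = supp m \<inter> e1"
          by (metis in_set_conv_nth)
        then have "m \<in> stanley_space (fst (D!i)) (snd (D!i))"
          using Di[of i] memsp2[OF i(1)] sn ni lenD by auto
        then show "m \<in> (\<Union>i<length D. stanley_space (fst (D!i)) (snd (D!i)))"
          using i lenD by auto
      qed
    qed
  qed
  have reg: "stanley_reg_of D \<le> card e1 - 1"
    unfolding stanley_reg_of_def
  proof (rule Sup_nat_le)
    show "finite ((\<lambda>p. card (fst p)) ` set D)" by simp
  next
    fix y assume "y \<in> (\<lambda>p. card (fst p)) ` set D"
    then obtain A where "A \<in> set xs" "y = card A" unfolding D_def by auto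
    then have "A \<subset> e1" "y = card A" using xs(2) by auto
    then have "y < card e1" using fin psubset_card_mono by blast
    then show "y \<le> card e1 - 1" by simp
  qed
  have "sreg n E \<le> stanley_reg_of D"
    unfolding sreg_def by (rule cInf_lower) (use dec in auto)
  then show ?thesis using reg by simp
qed

end
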